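(* Let $q$ be a prime power and let $M=(m_{ij})$ be a $2\times 2$ matrix with all $m_{ij}\in\mathbb{F}_q$. Let $N=(n_{ij})$ be the $2\times 2$ matrix with $n_{11}=m_{11}$, $n_{22}=m_{22}$, $n_{21}=0$, $n_{12}=m_{12}+m_{21}$. Then $\mathrm{Num}'_0(M)_q=\mathrm{Num}'_0(N)_q$ and $\mathrm{Num}_k(M)_q=\mathrm{Num}_k(N)_q$ for all $k\in\mathbb{F}_q$. Moreover: (i) If $q\equiv -1\pmod 4$, then $\mathrm{Num}'_0(M)_q=\emptyset$. (ii) Assume $q$ is even. If $m_{22}+m_{12}+m_{21}+m_{11}\neq 0$, then $\mathrm{Num}'_0(M)_q=\mathbb{F}_q^*$ and $\sharp(\mathrm{Num}_k(M)_q)\ge q/2$ for all $k\in\mathbb{F}_q^*$. If $m_{22}+m_{12}+m_{21}+m_{11}=0$, then $\mathrm{Num}'_0(M)_q=\{0\}$ and for each fixed $k\in\mathbb{F}_q^*$ either $\mathrm{Num}_k(M)_q=\mathbb{F}_q$ or $\sharp(\mathrm{Num}_k(M)_q)=1$. If $m_{12}+m_{21}=0$ and $m_{11}\neq m_{22}$, then $\mathrm{Num}_k(M)_q=\mathbb{F}_q$ for all $k\in\mathbb{F}_q^*$. (iii) Assume $q\equiv 1\pmod 4$. (iii1) If $m_{12}+m_{21}\neq 0$, then $\mathrm{Num}_0(M)_q$ contains at least $(q-1)/2$ elements of $\mathbb{F}_q^*$. (iii2) Assume $m_{12}+m_{21}=0$. If $m_{11}=m_{22}$, then $\mathrm{Num}_k(M)_q=\{km_{11}\}$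 for all $k\in\mathbb{F}_q$ and $0\in\mathrm{Num}'_0(M)_q$. If $m_{11}\neq m_{22}$, then $\sharp(\mathrm{Num}_k(M)_q)\le (q+1)/2$ for all $k\in\mathbb{F}_q$, $\sharp(\mathrm{Num}_0(M)_q)=(q+1)/2$ and $\sharp(\mathrm{Num}'_0(M)_q)=(q-1)/2$.
   Context: The Hermitian form on $\mathbb{F}_{q^2}^n$ is $\langle u,v\rangle=\sum_i u_i^q v_i$; for $u=(x_1,\dots,x_n)\in\mathbb{F}_q^n$ and $M=(m_{ij})$ with entries in $\mathbb{F}_q$ one has $\langle u,u\rangle=\sum_i x_i^2$ and $\langle u,Mu\rangle=\sum_{i,j}m_{ij}x_ix_j$. For such $M$ and $k\in\mathbb{F}_q$, $\mathrm{Num}_k(M)_q=\{\langle u,Mu\rangle: u\in\mathbb{F}_q^n,\ \langle u,u\rangle=k\}$, and (for $n\ge 2$) $\mathrm{Num}'_0(M)_q=\{\langle u,Mu\rangle: u\in\mathbb{F}_q^n\setminus\{0\},\ \langle u,u\rangle=0\}$. *)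

theory Defs
  imports "HOL-Analysis.Finite_Cartesian_Product"
begin

text \<open>The finite field F_q is a type 'a of class {field, finite}; q = CARD('a).\<close>

definition herm_self :: "'a::{field,finite}^'n \<Rightarrow> 'a" where
  "herm_self u = (\<Sum>i\<in>UNIV. (u$i)^2)"

definition herm_M :: "'a::{field,finite}^'n^'n \<Rightarrow> 'a^'n \<Rightarrow> 'a" where
  "herm_M M u = (\<Sum>i\<in>UNIV. \<Sum>j\<in>UNIV. M$i$j * u$i * u$j)"

definition Num :: "'a::{field,finite}^'n^'n \<Rightarrow> 'a \<Rightarrow> 'a set" where
  "Num M k = {herm_M M u | u. herm_self u = k}"

definition Num0' :: "'a::{field,finite}^'n^'n \<Rightarrow> 'a set" where
  "Num0' M = {herm_M M u | u. u \<noteq> 0 \<and> herm_self u = 0}"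

end

theory Submission
  imports Defs "HOL-Analysis.Cartesian_Space"
begin


lemma involution_parity:
  assumes "finite S" "\<forall>x\<in>S. f x \<in> S \<and> f (f x) = x"
  shows "even (card S) = even (card {x\<in>S. f x = x})"
  using assms
proof (induction "card S" arbitrary: S rule: less_induct)
  case less
  show ?case
  proof (cases "S = {}")
    case True then show ?thesis by simp
  next
    case False
    then obtain x where x: "x \<in> S" by blast
    show ?thesis
    proof (cases "f x = x")
      case True
      let ?S = "S - {x}"
      have c: "card ?S < card S" using x less.prems(1) by (meson card_Diff1_less)
      have inv: "\<forall>y\<in>?S. f y \<in> ?S \<and> f (f y) = y"
      proof
        fix y assume y: "y \<in> ?S"
        have ff: "f (f y) = y" "f y \<in> S" using less.prems(2) y by auto
        have "f y \<noteq> x"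
        proof
          assume "f y = x" then have "y = f x" using ff by simp
          then show False using y True by simp
        qed
        then show "f y \<in> ?S \<and> f (f y) = y" using ff by simp
      qed
      have IH: "even (card ?S) = even (card {y\<in>?S. f y = y})"
        using less.hyps[OF c _ inv] less.prems(1) by simp
      have e1: "{y\<in>?S. f y = y} = {y\<in>S. f y = y} - {x}" by auto
      have cS: "card S = Suc (card ?S)" using x less.prems(1) by (metis card_Suc_Diff1)
      have cF: "card {y\<in>S. f y = y} = Suc (card ({y\<in>S. f y = y} - {x}))"
        using card_Suc_Diff1[of "{y\<in>S. f y = y}" x] x True less.prems(1) by simp
      show ?thesis using IH e1 cS cF by simp
    next
      case False
      let ?S = "S - {x, f x}"
      have fx: "f x \<in> S" using less.prems(2) x by blast
      have fx2: "f x \<in> S - {x}" using fx False by simp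
      have c1: "card S = Suc (card (S - {x}))" using x less.prems(1) by (metis card_Suc_Diff1)
      have c2: "card (S - {x}) = Suc (card (S - {x} - {f x}))" using fx2 less.prems(1) by (metis card_Suc_Diff1 finite_Diff)
      have "S - {x} - {f x} = ?S" by auto
      then have cS: "card S = Suc (Suc (card ?S))" using c1 c2 by simp
      have c: "card ?S < card S" using cS by simp
      have inv: "\<forall>y\<in>?S. f y \<in> ?S \<and> f (f y) = y"
      proof
        fix y assume y: "y \<in> ?S"
        have ff: "f (f y) = y" "f y \<in> S" "f (f x) = x" using less.prems(2) x y by auto
        have "f y \<noteq> x" using ff y by auto
        moreover have "f y \<noteq> f x"
        proof
          assume "f y = f x" then have "f (f y) = f (f x)" by simp
          then have "y = x" using ff by simp
          then show False using y by simp
        qed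
        ultimately show "f y \<in> ?S \<and> f (f y) = y" using ff by simp
      qed
      have IH: "even (card ?S) = even (card {y\<in>?S. f y = y})"
        using less.hyps[OF c _ inv] less.prems(1) by simp
      have ffx: "f (f x) = x" using less.prems(2) x by blast
      have e1: "{y\<in>?S. f y = y} = {y\<in>S. f y = y}"
      proof (rule set_eqI)
        fix y
        have "f y = y \<Longrightarrow> y \<noteq> x \<and> y \<noteq> f x" using False ffx by auto
        then show "y \<in> {y\<in>?S. f y = y} \<longleftrightarrow> y \<in> {y\<in>S. f y = y}" by blast
      qed
      show ?thesis using IH e1 cS by simp
    qed
  qed
qed

lemma char2_even:
  assumes "(2::'a::{field,finite}) = 0" shows "even CARD('a)"
proof -
  have fin: "finite (UNIV::'a set)" by simp
  have inv: "\<forall>x\<in>(UNIV::'a set). x + 1 \<in> UNIV \<and> x + 1 + 1 = x"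
  proof
    fix x :: 'a
    have "x + 1 + 1 = x" using assms by (metis add.assoc one_add_one add_0_right)
    then show "x + 1 \<in> UNIV \<and> x + 1 + 1 = x" by simp
  qed
  note P = involution_parity[where f="\<lambda>x. x + 1", OF fin inv]
  have "{x\<in>(UNIV::'a set). x + 1 = x} = {}" by auto
  then show ?thesis using P by simp
qed

lemma odd_card_if:
  assumes "(2::'a::{field,finite}) \<noteq> 0" shows "odd CARD('a)"
proof -
  have fin: "finite (UNIV::'a set)" by simp
  have inv: "\<forall>x\<in>(UNIV::'a set). - x \<in> UNIV \<and> - (- x) = x" by simp
  note P = involution_parity[where f=uminus, OF fin inv]
  have "{x\<in>(UNIV::'a set). - x = x} = {0}"
  proof -
    have H: "- x = x \<Longrightarrow> x = 0" for x :: 'a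
    proof -
      assume "- x = x"
      then have "2 * x = 0" by (metis mult_2 neg_eq_iff_add_eq_0)
      then show "x = 0" using assms by simp
    qed
    show ?thesis using H minus_zero by blast
  qed
  then show ?thesis using P by simp
qed

lemma even_iff_char2: "even CARD('a::{field,finite}) \<longleftrightarrow> (2::'a) = 0"
  using char2_even odd_card_if by blast

definition sqs :: "'a::{field,finite} set" where "sqs = (\<lambda>x. x^2) ` (UNIV - {0})"

lemma card_sqs:
  assumes "(2::'a::{field,finite}) \<noteq> 0"
  shows "2 * card (sqs::'a set) = CARD('a) - 1"
proof -
  have U: "(UNIV - {0::'a}) = (\<Union>v\<in>sqs. {x. x \<noteq> 0 \<and> x^2 = v})" unfolding sqs_def by auto
  have fib: "card {x. x \<noteq> 0 \<and> x^2 = v} = 2" if "v \<in> sqs" for v :: 'a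
  proof -
    obtain r where r: "r \<noteq> 0" "v = r^2" using \<open>v \<in> sqs\<close> unfolding sqs_def by auto
    have "{x. x \<noteq> 0 \<and> x^2 = v} = {r, -r}"
    proof -
      have "x^2 = r^2 \<longleftrightarrow> x = r \<or> x = -r" for x :: 'a
        by (metis power2_eq_iff)
      then show ?thesis using r by auto
    qed
    moreover have "r \<noteq> -r"
    proof
      assume "r = -r" then have "2 * r = 0" by (metis mult_2 neg_eq_iff_add_eq_0)
      then show False using r assms by simp
    qed
    ultimately show ?thesis by simp
  qed
  have "card (UNIV - {0::'a}) = (\<Sum>v\<in>sqs. card {x. x \<noteq> 0 \<and> x^2 = (v::'a)})"
    unfolding U by (rule card_UN_disjoint) auto
  also have "\<dots> = (\<Sum>v\<in>(sqs::'a set). 2)" using fib by simp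
  also have "\<dots> = 2 * card (sqs::'a set)" by simp
  finally show ?thesis by (simp add: card_Diff_singleton)
qed

lemma zero_notin_sqs: "0 \<notin> sqs" unfolding sqs_def by auto

lemma all_sqs: "(\<lambda>x. x^2) ` (UNIV::'a::{field,finite} set) = insert 0 sqs"
  unfolding sqs_def by auto

lemma minus_one_sq_iff:
  assumes "(2::'a::{field,finite}) \<noteq> 0"
  shows "(-1::'a) \<in> sqs \<longleftrightarrow> even (card (sqs::'a set))"
proof -
  have inv: "\<forall>x\<in>(sqs::'a set). inverse x \<in> sqs \<and> inverse (inverse x) = x"
  proof
    fix v :: 'a assume "v \<in> sqs"
    then obtain r where r: "r \<noteq> 0" "v = r^2" unfolding sqs_def by auto
    have "inverse v = (inverse r)^2" using r by (simp add: power_inverse)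
    moreover have "inverse r \<noteq> 0" using r by simp
    ultimately have "inverse v \<in> sqs" unfolding sqs_def by auto
    then show "inverse v \<in> sqs \<and> inverse (inverse v) = v" by simp
  qed
  have fin: "finite (sqs::'a set)" by simp
  have P: "even (card (sqs::'a set)) = even (card {x\<in>(sqs::'a set). inverse x = x})"
    by (rule involution_parity[where f=inverse, OF fin inv])
  have fixs: "{x\<in>(sqs::'a set). inverse x = x} = {1} \<union> ({-1} \<inter> sqs)"
  proof -
    have H: "inverse x = x \<longleftrightarrow> x = 1 \<or> x = -1" if "x \<noteq> 0" for x :: 'a
    proof -
      have "inverse x = x \<longleftrightarrow> x^2 = 1^2" using that
        by (metis field_class.field_inverse inverse_unique power2_eq_square power_one)
      then show ?thesis by (metis power2_eq_iff)
    qed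
    have one: "(1::'a) \<in> sqs" unfolding sqs_def by (metis DiffI image_iff one_neq_zero one_power2 singletonD UNIV_I)
    show ?thesis
    proof (rule set_eqI)
      fix x :: 'a
      show "x \<in> {x\<in>(sqs::'a set). inverse x = x} \<longleftrightarrow> x \<in> {1} \<union> ({-1} \<inter> sqs)"
        using H[of x] one zero_notin_sqs assms by (cases "x = 0") auto
    qed
  qed
  have ne: "(1::'a) \<noteq> -1"
  proof
    assume "(1::'a) = -1" then have "(2::'a) = 0" by (metis one_add_one neg_eq_iff_add_eq_0)
    then show False using assms by simp
  qed
  show ?thesis
  proof (cases "(-1::'a) \<in> sqs")
    case True
    then have "{x\<in>(sqs::'a set). inverse x = x} = {1, -1}" using fixs by auto
    then show ?thesis using P ne True by simp
  next
    case False
    then have "{x\<in>(sqs::'a set). inverse x = x} = {1}" using fixs by auto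
    then show ?thesis using P False by simp
  qed
qed

lemma mod4_1_sqrt:
  assumes "CARD('a::{field,finite}) mod 4 = 1"
  shows "\<exists>i::'a. i^2 = -1" "(2::'a) \<noteq> 0"
proof -
  have o: "odd CARD('a)" using assms by presburger
  show t: "(2::'a) \<noteq> 0" using o even_iff_char2[where 'a='a] by simp
  have "even (card (sqs::'a set))" using card_sqs[OF t] assms by presburger
  then have "(-1::'a) \<in> sqs" using minus_one_sq_iff[OF t] by simp
  then show "\<exists>i::'a. i^2 = -1" unfolding sqs_def by auto
qed

lemma mod4_3_nosqrt:
  assumes "CARD('a::{field,finite}) mod 4 = 3"
  shows "\<not> (\<exists>i::'a. i^2 = -1)"
proof -
  have o: "odd CARD('a)" using assms by presburger
  have t: "(2::'a) \<noteq> 0" using o even_iff_char2[where 'a='a] by simp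
  have "odd (card (sqs::'a set))" using card_sqs[OF t] assms by presburger
  then have n: "(-1::'a) \<notin> sqs" using minus_one_sq_iff[OF t] by simp
  show ?thesis
  proof
    assume "\<exists>i::'a. i^2 = -1"
    then obtain i :: 'a where i: "i^2 = -1" by blast
    then have "i \<in> UNIV - {0}" by auto
    then have "-1 \<in> (sqs::'a set)" unfolding sqs_def using i by (metis image_eqI)
    then show False using n by simp
  qed
qed




definition NS :: "'a::{field,finite} \<Rightarrow> 'a \<Rightarrow> 'a \<Rightarrow> 'a \<Rightarrow> 'a set" where
  "NS a c b k = {a*x^2 + c*x*y + b*y^2 | x y. x^2 + y^2 = k}"
definition N0 :: "'a::{field,finite} \<Rightarrow> 'a \<Rightarrow> 'a \<Rightarrow> 'a set" where
  "N0 a c b = {a*x^2 + c*x*y + b*y^2 | x y. (x \<noteq> 0 \<or> y \<noteq> 0) \<and> x^2 + y^2 = 0}"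

lemma herm_self2: "herm_self (u::'a::{field,finite}^2) = (u$1)^2 + (u$2)^2"
  unfolding herm_self_def sum_2 by simp

lemma herm_M2: "herm_M (M::'a::{field,finite}^2^2) u
   = M$1$1*(u$1)^2 + (M$1$2+M$2$1)*(u$1)*(u$2) + M$2$2*(u$2)^2"
  unfolding herm_M_def sum_2 by (simp add: algebra_simps power2_eq_square)

lemma vec2_ex: "\<exists>u::'a::zero^2. u$1 = x \<and> u$2 = y"
  using vector_2 by blast

lemma vec2_zero: "(u::'a::zero^2) = 0 \<longleftrightarrow> u$1 = 0 \<and> u$2 = 0"
  by (simp add: vec_eq_iff forall_2)

lemma Num_eq: "Num (M::'a::{field,finite}^2^2) k = NS (M$1$1) (M$1$2+M$2$1) (M$2$2) k"
proof (rule set_eqI)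
  fix v
  show "v \<in> Num M k \<longleftrightarrow> v \<in> NS (M$1$1) (M$1$2+M$2$1) (M$2$2) k"
  proof
    assume "v \<in> Num M k"
    then obtain u where "v = herm_M M u" "herm_self u = k" unfolding Num_def by blast
    then show "v \<in> NS (M$1$1) (M$1$2+M$2$1) (M$2$2) k"
      unfolding NS_def herm_M2 herm_self2 by blast
  next
    assume "v \<in> NS (M$1$1) (M$1$2+M$2$1) (M$2$2) k"
    then obtain x y where xy: "v = M$1$1*x^2 + (M$1$2+M$2$1)*x*y + M$2$2*y^2" "x^2+y^2 = k"
      unfolding NS_def by blast
    obtain u :: "'a^2" where u: "u$1 = x" "u$2 = y" using vec2_ex by blast
    have "v = herm_M M u" "herm_self u = k" using xy u unfolding herm_M2 herm_self2 by simp_all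
    then show "v \<in> Num M k" unfolding Num_def by blast
  qed
qed

lemma Num0_eq: "Num0' (M::'a::{field,finite}^2^2) = N0 (M$1$1) (M$1$2+M$2$1) (M$2$2)"
proof (rule set_eqI)
  fix v
  show "v \<in> Num0' M \<longleftrightarrow> v \<in> N0 (M$1$1) (M$1$2+M$2$1) (M$2$2)"
  proof
    assume "v \<in> Num0' M"
    then obtain u where "v = herm_M M u" "herm_self u = 0" "u \<noteq> 0" unfolding Num0'_def by blast
    then show "v \<in> N0 (M$1$1) (M$1$2+M$2$1) (M$2$2)"
      unfolding N0_def herm_M2 herm_self2 vec2_zero by blast
  next
    assume "v \<in> N0 (M$1$1) (M$1$2+M$2$1) (M$2$2)"
    then obtain x y where xy: "v = M$1$1*x^2 + (M$1$2+M$2$1)*x*y + M$2$2*y^2" "x^2+y^2 = 0"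
       "x \<noteq> 0 \<or> y \<noteq> 0"
      unfolding N0_def by blast
    obtain u :: "'a^2" where u: "u$1 = x" "u$2 = y" using vec2_ex by blast
    have "v = herm_M M u" "herm_self u = 0" "u \<noteq> 0" using xy u unfolding herm_M2 herm_self2 vec2_zero by simp_all
    then show "v \<in> Num0' M" unfolding Num0'_def by blast
  qed
qed

lemma case_i:
  assumes "\<not> (\<exists>i::'a::{field,finite}. i^2 = -1)"
  shows "N0 a c (b::'a) = {}"
proof -
  have "x = 0 \<and> y = 0" if "x^2 + y^2 = (0::'a)" for x y
  proof (cases "y = 0")
    case True then show ?thesis using that by simp
  next
    case False
    have "(x/y)^2 = x^2/y^2" by (simp add: power_divide)
    also have "x^2 = - (y^2)" using that by (simp add: eq_neg_iff_add_eq_0)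
    also have "- (y^2) / y^2 = -1" using False by simp
    finally show ?thesis using assms by blast
  qed
  then show ?thesis unfolding N0_def by blast
qed



context
  fixes dummy :: "'a::{field,finite}"
  assumes two: "(2::'a) = 0"
begin

lemma e_neg: "- (x::'a) = x"
proof -
  have "x + x = 0" using two by (metis mult_2 mult_zero_left)
  then show ?thesis by (rule minus_unique)
qed

lemma e_dbl: "2 * (x::'a) = 0" using two by simp

lemma e_sum: "(x::'a)^2 + y^2 = (x+y)^2"
proof -
  have "(x+y)^2 = x^2 + y^2 + 2*(x*y)" by (simp add: power2_eq_square algebra_simps)
  then show ?thesis using e_dbl[of "x*y"] by simp
qed

lemma e_sq_inj: "(x::'a)^2 = y^2 \<Longrightarrow> x = y"
proof -
  assume h: "x^2 = y^2"
  have "(x - y)^2 = x^2 - y^2 + 2*(y^2 - x*y)" by (simp add: power2_eq_square algebra_simps)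
  also have "\<dots> = 0" using h e_dbl[of "y^2 - x*y"] by simp
  finally show "x = y" by simp
qed

lemma e_sqrt: "\<exists>t::'a. t^2 = k"
proof -
  have "inj (\<lambda>x::'a. x^2)" by (rule injI) (rule e_sq_inj)
  then have "surj (\<lambda>x::'a. x^2)" by (simp add: finite_UNIV_inj_surj)
  then show ?thesis by (metis surjD)
qed

lemma e_N0: "N0 a c (b::'a) = {(a+b+c)*x^2 | x. x \<noteq> 0}"
proof -
  have "(x^2 + y^2 = 0) \<longleftrightarrow> y = x" for x y :: 'a
  proof -
    have "(x^2 + y^2 = 0) \<longleftrightarrow> (x + y)^2 = 0" by (simp add: e_sum)
    also have "\<dots> \<longleftrightarrow> x + y = 0" by simp
    also have "\<dots> \<longleftrightarrow> y = - x" by (simp add: eq_neg_iff_add_eq_0 add.commute)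
    also have "\<dots> \<longleftrightarrow> y = x" by (simp add: e_neg)
    finally show ?thesis .
  qed
  moreover have "a*x^2 + c*x*x + b*x^2 = (a+b+c)*x^2" for x :: 'a
    by (simp add: power2_eq_square algebra_simps)
  ultimately show ?thesis unfolding N0_def by auto
qed

lemma e_NS:
  assumes t: "t^2 = (k::'a)"
  shows "NS a c b k = range (\<lambda>x. (a+b+c)*x^2 + c*t*x + b*t^2)"
proof -
  have eq: "(x^2 + y^2 = k) \<longleftrightarrow> y = t + x" for x y :: 'a
  proof -
    have "(x^2 + y^2 = k) \<longleftrightarrow> (x + y)^2 = t^2" by (simp add: e_sum t)
    also have "\<dots> \<longleftrightarrow> x + y = t" using e_sq_inj[of "x+y" t] by blast
    also have "\<dots> \<longleftrightarrow> y = t - x" by (auto simp: algebra_simps)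
    also have "t - x = t + x" by (metis diff_conv_add_uminus e_neg)
    finally show ?thesis .
  qed
  have val: "a*x^2 + c*x*(t+x) + b*(t+x)^2 = (a+b+c)*x^2 + c*t*x + b*t^2" for x :: 'a
  proof -
    have "a*x^2 + c*x*(t+x) + b*(t+x)^2 = (a+b+c)*x^2 + c*t*x + b*t^2 + 2*(b*t*x)"
      by (simp add: power2_eq_square algebra_simps)
    then show ?thesis using e_dbl[of "b*t*x"] by simp
  qed
  show ?thesis
  proof (rule set_eqI)
    fix v
    show "v \<in> NS a c b k \<longleftrightarrow> v \<in> range (\<lambda>x. (a+b+c)*x^2 + c*t*x + b*t^2)"
    proof
      assume "v \<in> NS a c b k"
      then obtain x y where "v = a*x^2 + c*x*y + b*y^2" "x^2+y^2 = k" unfolding NS_def by blast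
      then have "v = a*x^2 + c*x*(t+x) + b*(t+x)^2" using eq by simp
      then show "v \<in> range (\<lambda>x. (a+b+c)*x^2 + c*t*x + b*t^2)" using val by auto
    next
      assume "v \<in> range (\<lambda>x. (a+b+c)*x^2 + c*t*x + b*t^2)"
      then obtain x where "v = (a+b+c)*x^2 + c*t*x + b*t^2" by blast
      then have "v = a*x^2 + c*x*(t+x) + b*(t+x)^2" "x^2 + (t+x)^2 = k" using val eq by auto
      then show "v \<in> NS a c b k" unfolding NS_def by blast
    qed
  qed
qed

lemma E1: assumes s: "a+b+c \<noteq> (0::'a)" shows "N0 a c b = UNIV - {0}"
proof -
  have "v \<in> {(a+b+c)*x^2 | x. x \<noteq> 0}" if v0: "v \<noteq> 0" for v
  proof -
    obtain x where x: "x^2 = v/(a+b+c)" using e_sqrt by blast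
    have "x \<noteq> 0"
    proof
      assume "x = 0" then have "v/(a+b+c) = 0" using x by simp
      then show False using v0 s by simp
    qed
    moreover have "v = (a+b+c)*x^2" unfolding x using s by simp
    ultimately show ?thesis by blast
  qed
  then have A: "v \<in> {(a+b+c)*x^2 | x. x \<noteq> 0}" if "v \<in> UNIV - {0}" for v using that by blast
  have B: "v \<in> UNIV - {0}" if vin: "v \<in> {(a+b+c)*x^2 | x. x \<noteq> 0}" for v
  proof -
    obtain x where "x \<noteq> 0" "v = (a+b+c)*x^2" using vin by blast
    then show ?thesis using s by simp
  qed
  show ?thesis unfolding e_N0 using A B by blast
qed

lemma E3: assumes s: "a+b+c = (0::'a)" shows "N0 a c b = {0}"
proof -
  have "{(a+b+c)*x^2 | x. x \<noteq> 0} = {(0::'a)}"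
  proof
    show "{(a+b+c)*x^2 | x. x \<noteq> 0} \<subseteq> {0}" using s by auto
    have "(0::'a) = (a+b+c)*1^2" "(1::'a) \<noteq> 0" using s by simp_all
    then show "{0} \<subseteq> {(a+b+c)*x^2 | x. x \<noteq> (0::'a)}" by blast
  qed
  then show ?thesis unfolding e_N0 .
qed

lemma card2_le: "card {p, q} \<le> 2"
  by (cases "p = q") simp_all

lemma E2: assumes s0: "a+b+c \<noteq> (0::'a)" and k: "k \<noteq> 0"
  shows "real CARD('a) / 2 \<le> real (card (NS a c b k))"
proof -
  obtain t where t: "t^2 = k" using e_sqrt by blast
  define s where "s = a+b+c"
  define g where "g = (\<lambda>x. s*x^2 + c*t*x + b*t^2)"
  have NSg: "NS a c b k = range g" unfolding g_def s_def using e_NS[OF t] .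
  have fib: "card {x. g x = g x0} \<le> 2" for x0
  proof -
    have "{x. g x = g x0} \<subseteq> {x0, -(c*t)/s - x0}"
    proof
      fix y assume "y \<in> {x. g x = g x0}"
      then have "g y - g x0 = 0" by simp
      moreover have "g y - g x0 = (y - x0) * (s*(y + x0) + c*t)"
        unfolding g_def by (simp add: power2_eq_square algebra_simps)
      ultimately have "y = x0 \<or> s*(y + x0) + c*t = 0" by simp
      moreover have "y = -(c*t)/s - x0" if h: "s*(y + x0) + c*t = 0"
      proof -
        have sn: "s \<noteq> 0" using s0 unfolding s_def .
        have "s*(y+x0) = -(c*t)" using h by (simp add: eq_neg_iff_add_eq_0)
        then have "y + x0 = -(c*t)/s" using sn by (metis nonzero_mult_div_cancel_left)
        then show ?thesis by (simp add: eq_diff_eq)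
      qed
      ultimately show "y \<in> {x0, -(c*t)/s - x0}" by blast
    qed
    then have "card {x. g x = g x0} \<le> card {x0, -(c*t)/s - x0}" by (simp add: card_mono)
    also have "\<dots> \<le> 2" by (rule card2_le)
    finally show ?thesis .
  qed
  have U: "(UNIV::'a set) = (\<Union>v\<in>range g. {x. g x = v})" by auto
  have "CARD('a) \<le> (\<Sum>v\<in>range g. card {x. g x = v})"
    by (subst U) (rule card_UN_le, simp)
  also have "\<dots> \<le> (\<Sum>v\<in>range g. 2)" using fib by (intro sum_mono) auto
  also have "\<dots> = 2 * card (range g)" by simp
  finally have "CARD('a) \<le> 2 * card (range g)" .
  then have "real CARD('a) \<le> 2 * real (card (range g))" by linarith
  then show ?thesis using NSg by simp
qed

lemma E4: assumes s: "a+b+c = (0::'a)" and k: "k \<noteq> 0"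
  shows "NS a c b k = UNIV \<or> card (NS a c b k) = 1"
proof -
  obtain t where t: "t^2 = k" using e_sqrt by blast
  have t0: "t \<noteq> 0" using t k by auto
  have NSg: "NS a c b k = range (\<lambda>x. c*t*x + b*t^2)" using e_NS[OF t] s by simp
  show ?thesis
  proof (cases "c = 0")
    case True
    then have "NS a c b k = {b*t^2}" using NSg by auto
    then show ?thesis by simp
  next
    case False
    have "v \<in> range (\<lambda>x. c*t*x + b*t^2)" for v
    proof
      show "v = c*t*((v - b*t^2)/(c*t)) + b*t^2" using False t0 by simp
    qed simp
    then show ?thesis using NSg by blast
  qed
qed

lemma E5: assumes c: "c = (0::'a)" and ab: "a \<noteq> b"
  shows "NS a c b k = UNIV"
proof -
  obtain t where t: "t^2 = k" using e_sqrt by blast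
  have s: "a + b \<noteq> 0"
  proof
    assume "a + b = 0" then have "a = - b" by (simp add: eq_neg_iff_add_eq_0)
    then show False using ab e_neg[of b] by simp
  qed
  have NSg: "NS a c b k = range (\<lambda>x. (a+b)*x^2 + b*t^2)" using e_NS[OF t] c by simp
  have "v \<in> range (\<lambda>x. (a+b)*x^2 + b*t^2)" for v
  proof -
    obtain x where x: "x^2 = (v - b*t^2)/(a+b)" using e_sqrt by blast
    have "v = (a+b)*x^2 + b*t^2" using x s by simp
    then show ?thesis by blast
  qed
  then show ?thesis using NSg by blast
qed

end



lemma real_card_sqs:
  assumes "(2::'a::{field,finite}) \<noteq> 0"
  shows "real (card (sqs::'a set)) = (real CARD('a) - 1) / 2"
proof -
  have "CARD('a) \<ge> 1" by (simp add: Suc_leI)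
  then have h: "2 * card (sqs::'a set) + 1 = CARD('a)" using card_sqs[OF assms] by linarith
  have "real (2 * card (sqs::'a set) + 1) = real CARD('a)" by (simp only: h)
  then show ?thesis by simp
qed

lemma card_all_sqs: "card ((\<lambda>x. x^2) ` (UNIV::'a::{field,finite} set)) = card (sqs::'a set) + 1"
proof -
  have "finite (sqs::'a set)" by simp
  then show ?thesis unfolding all_sqs using zero_notin_sqs[where 'a='a] by simp
qed

lemma card_mult_img:
  assumes "d \<noteq> (0::'a::field)" shows "card ((\<lambda>v. d * v) ` S) = card S"
proof -
  have "inj_on (\<lambda>v. d * v) S" using assms by (auto intro: inj_onI)
  then show ?thesis by (rule card_image)
qed

context
  fixes i :: "'a::{field,finite}"
  assumes ii: "i^2 = -1" and two: "(2::'a) \<noteq> 0"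
begin

lemma i0: "i \<noteq> 0" using ii by auto

lemma iy2: "(i*y)^2 = - (y^2)"
  by (simp add: power_mult_distrib ii)

lemma o_zero: "(x^2 + y^2 = 0) \<longleftrightarrow> x = i*y \<or> x = -(i*y)"
proof -
  have "(x^2 + y^2 = 0) \<longleftrightarrow> x^2 = (i*y)^2" unfolding iy2 by (simp add: eq_neg_iff_add_eq_0)
  also have "\<dots> \<longleftrightarrow> x = i*y \<or> x = -(i*y)" by (rule power2_eq_iff)
  finally show ?thesis .
qed

lemma val_p: "a*(i*y)^2 + c*(i*y)*y + b*y^2 = (b - a + c*i)*y^2"
proof -
  have "a*(i*y)^2 + c*(i*y)*y + b*y^2 = (b - a + c*i)*y^2 + a*y^2*(i^2 + 1)"
    by (simp add: power2_eq_square algebra_simps)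
  then show ?thesis using ii by simp
qed

lemma val_m: "a*(-(i*y))^2 + c*(-(i*y))*y + b*y^2 = (b - a - c*i)*y^2"
proof -
  have "a*(-(i*y))^2 + c*(-(i*y))*y + b*y^2 = (b - a - c*i)*y^2 + a*y^2*(i^2 + 1)"
    by (simp add: power2_eq_square algebra_simps)
  then show ?thesis using ii by simp
qed

lemma O1_aux:
  assumes d: "d \<noteq> (0::'a)" and dy: "\<And>y. d*y^2 \<in> NS a c b 0"
  shows "card (sqs::'a set) \<le> card (NS a c b 0 - {0})"
proof -
  have "(\<lambda>v. d * v) ` sqs \<subseteq> NS a c b 0 - {0}"
  proof
    fix w assume "w \<in> (\<lambda>v. d * v) ` sqs"
    then obtain y where y: "y \<noteq> 0" "w = d*y^2" unfolding sqs_def by auto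
    then show "w \<in> NS a c b 0 - {0}" using dy[of y] d by simp
  qed
  then have "card ((\<lambda>v. d * v) ` sqs) \<le> card (NS a c b 0 - {0})" by (simp add: card_mono)
  then show ?thesis using card_mult_img[OF d] by simp
qed

lemma O1:
  assumes c: "c \<noteq> (0::'a)"
  shows "(real CARD('a) - 1) / 2 \<le> real (card (NS a c b 0 - {0}))"
proof -
  have "card (sqs::'a set) \<le> card (NS a c b 0 - {0})"
  proof (cases "b - a + c*i = 0")
    case False
    show ?thesis
    proof (rule O1_aux[OF False])
      fix y
      have "(i*y)^2 + y^2 = 0" using o_zero by blast
      then show "(b - a + c*i)*y^2 \<in> NS a c b 0" unfolding NS_def using val_p[of a y c b, symmetric] by blast
    qed
  next
    case True
    have ne: "b - a - c*i \<noteq> 0"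
    proof
      assume "b - a - c*i = 0"
      then have "(b - a + c*i) - (b - a - c*i) = 0" using True by simp
      then have "2 * (c*i) = 0" by (simp add: algebra_simps mult_2)
      then show False using two c i0 by simp
    qed
    show ?thesis
    proof (rule O1_aux[OF ne])
      fix y
      have "(-(i*y))^2 + y^2 = 0" using o_zero by blast
      then show "(b - a - c*i)*y^2 \<in> NS a c b 0" unfolding NS_def using val_m[of a y c b, symmetric] by blast
    qed
  qed
  then show ?thesis using real_card_sqs[OF two] by simp
qed

lemma O2a: "NS a 0 a k = {k*(a::'a)}"
proof
  show "NS a 0 a k \<subseteq> {k*a}"
  proof
    fix v assume "v \<in> NS a 0 a k"
    then obtain x y where "v = a*x^2 + 0*x*y + a*y^2" "x^2 + y^2 = k" unfolding NS_def by blast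
    moreover have "a*x^2 + 0*x*y + a*y^2 = a*(x^2+y^2)" by (simp add: algebra_simps)
    ultimately have "v = a*k" by simp
    then show "v \<in> {k*a}" by (simp add: mult.commute)
  qed
next
  have four: "(4::'a) \<noteq> 0"
  proof -
    have "(2::'a) * 2 \<noteq> 0" using two by (metis mult_eq_0_iff)
    moreover have "(2::'a) * 2 = 4" by simp
    ultimately show ?thesis by metis
  qed
  have i2: "(2*i)^2 = -4" by (simp add: power_mult_distrib ii)
  define x where "x = (k+1)/2"
  define y where "y = (k-1)/(2*i)"
  have y2: "y^2 = - ((k-1)^2/4)" unfolding y_def power_divide i2 by simp
  have "x^2 + y^2 = ((k+1)^2 - (k-1)^2)/4" unfolding y2 x_def by (simp add: power_divide diff_divide_distrib)
  also have "(k+1)^2 - (k-1)^2 = 4*k" by (simp add: power2_eq_square algebra_simps)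
  also have "4*k/4 = k" using four by simp
  finally have xy: "x^2 + y^2 = k" .
  have "a*x^2 + 0*x*y + a*y^2 = a*(x^2 + y^2)" by (simp add: algebra_simps)
  then have "k*a = a*x^2 + 0*x*y + a*y^2" unfolding xy by (simp add: mult.commute)
  then show "{k*a} \<subseteq> NS a 0 a k" unfolding NS_def using xy by blast
qed

lemma O2b: "0 \<in> N0 a 0 (a::'a)"
proof -
  have h1: "(i \<noteq> 0 \<or> (1::'a) \<noteq> 0) \<and> i^2 + 1^2 = 0" using ii by simp
  have h2: "0 = a*i^2 + 0*i*1 + a*1^2" using ii by simp
  show ?thesis unfolding N0_def using h1 h2 by blast
qed

lemma O3_sub: "NS (a::'a) 0 b k \<subseteq> (\<lambda>v. a*k + (b-a) * v) ` ((\<lambda>y. y^2) ` UNIV)"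
proof
  fix w assume "w \<in> NS a 0 b k"
  then obtain x y where w: "w = a*x^2 + 0*x*y + b*y^2" "x^2 + y^2 = k" unfolding NS_def by blast
  have e1: "w = a*x^2 + b*y^2" using w(1) by simp
  have e2: "x^2 = k - y^2" using w(2) by (simp add: eq_diff_eq)
  have "w = a*(k - y^2) + b*y^2" using e1 unfolding e2 .
  then have "w = a*k + (b-a)*y^2" by (simp add: algebra_simps)
  then show "w \<in> (\<lambda>v. a*k + (b-a) * v) ` ((\<lambda>y. y^2) ` UNIV)" by blast
qed

lemma O3a: "real (card (NS (a::'a) 0 b k)) \<le> (real CARD('a) + 1) / 2"
proof -
  have "card (NS a 0 b k) \<le> card ((\<lambda>v. a*k + (b-a) * v) ` ((\<lambda>y. y^2) ` (UNIV::'a set)))"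
    using O3_sub by (simp add: card_mono)
  also have "\<dots> \<le> card ((\<lambda>y. y^2) ` (UNIV::'a set))" by (simp add: card_image_le)
  also have "\<dots> = card (sqs::'a set) + 1" by (rule card_all_sqs)
  finally have "real (card (NS a 0 b k)) \<le> real (card (sqs::'a set)) + 1" by linarith
  moreover have "real (card (sqs::'a set)) + 1 = (real CARD('a) + 1) / 2"
    using real_card_sqs[OF two] by (simp add: field_simps)
  ultimately show ?thesis by simp
qed

lemma O3b: assumes ab: "(a::'a) \<noteq> b" shows "real (card (NS a 0 b 0)) = (real CARD('a) + 1) / 2"
proof -
  have d: "b - a \<noteq> 0" using ab by simp
  have "NS a 0 b 0 = (\<lambda>v. (b-a) * v) ` ((\<lambda>y. y^2) ` UNIV)"
  proof
    show "NS a 0 b 0 \<subseteq> (\<lambda>v. (b-a) * v) ` ((\<lambda>y. y^2) ` UNIV)" using O3_sub[of a b 0] by simp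
    show "(\<lambda>v. (b-a) * v) ` ((\<lambda>y. y^2) ` UNIV) \<subseteq> NS a 0 b 0"
    proof
      fix w assume "w \<in> (\<lambda>v. (b-a) * v) ` ((\<lambda>y. y^2) ` UNIV)"
      then obtain y where w: "w = (b-a)*y^2" by blast
      have "(i*y)^2 + y^2 = 0" using o_zero by blast
      moreover have "w = a*(i*y)^2 + 0*(i*y)*y + b*y^2" using w val_p[of a y 0 b] by simp
      ultimately show "w \<in> NS a 0 b 0" unfolding NS_def by blast
    qed
  qed
  then have "card (NS a 0 b 0) = card ((\<lambda>y. y^2) ` (UNIV::'a set))" using card_mult_img[OF d] by simp
  also have "\<dots> = card (sqs::'a set) + 1" by (rule card_all_sqs)
  finally show ?thesis using real_card_sqs[OF two] by simp
qed

lemma O3c: assumes ab: "(a::'a) \<noteq> b" shows "real (card (N0 a 0 b)) = (real CARD('a) - 1) / 2"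
proof -
  have d: "b - a \<noteq> 0" using ab by simp
  have "N0 a 0 b = (\<lambda>v. (b-a) * v) ` sqs"
  proof
    show "N0 a 0 b \<subseteq> (\<lambda>v. (b-a) * v) ` sqs"
    proof
      fix w assume "w \<in> N0 a 0 b"
      then obtain x y where w: "w = a*x^2 + 0*x*y + b*y^2" "x^2 + y^2 = 0" "x \<noteq> 0 \<or> y \<noteq> 0"
        unfolding N0_def by blast
      have y0: "y \<noteq> 0"
      proof
        assume "y = 0" then have "x^2 = 0" using w(2) by simp
        then show False using w(3) \<open>y = 0\<close> by simp
      qed
      have e1: "w = a*x^2 + b*y^2" using w(1) by simp
      have e2: "x^2 = - (y^2)" using w(2) by (simp add: eq_neg_iff_add_eq_0)
      have "w = a*(- (y^2)) + b*y^2" using e1 unfolding e2 .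
      then have "w = (b-a)*y^2" by (simp add: algebra_simps)
      moreover have "y^2 \<in> sqs" using y0 unfolding sqs_def by blast
      ultimately show "w \<in> (\<lambda>v. (b-a) * v) ` sqs" by blast
    qed
    show "(\<lambda>v. (b-a) * v) ` sqs \<subseteq> N0 a 0 b"
    proof
      fix w assume "w \<in> (\<lambda>v. (b-a) * v) ` sqs"
      then obtain y where w: "w = (b-a)*y^2" "y \<noteq> 0" unfolding sqs_def by blast
      have "(i*y)^2 + y^2 = 0" using o_zero by blast
      moreover have "w = a*(i*y)^2 + 0*(i*y)*y + b*y^2" using w val_p[of a y 0 b] by simp
      ultimately show "w \<in> N0 a 0 b" unfolding N0_def using w(2) by blast
    qed
  qed
  then have "card (N0 a 0 b) = card (sqs::'a set)" using card_mult_img[OF d] by simp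
  then show ?thesis using real_card_sqs[OF two] by simp
qed

end



theorem proposition5:
  fixes M N :: "'a::{field,finite}^2^2"
  assumes "N$1$1 = M$1$1" and "N$2$2 = M$2$2" and "N$2$1 = 0"
    and "N$1$2 = M$1$2 + M$2$1"
  shows "Num0' M = Num0' N \<and> (\<forall>k. Num M k = Num N k)
    \<and> (CARD('a) mod 4 = 3 \<longrightarrow> Num0' M = {})
    \<and> (even (CARD('a)) \<longrightarrow>
          (M$2$2 + M$1$2 + M$2$1 + M$1$1 \<noteq> 0 \<longrightarrow>
             Num0' M = UNIV - {0} \<and>
             (\<forall>k. k \<noteq> 0 \<longrightarrow> real (card (Num M k)) \<ge> real CARD('a) / 2))
        \<and> (M$2$2 + M$1$2 + M$2$1 + M$1$1 = 0 \<longrightarrow>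
             Num0' M = {0} \<and>
             (\<forall>k. k \<noteq> 0 \<longrightarrow> Num M k = UNIV \<or> card (Num M k) = 1))
        \<and> (M$1$2 + M$2$1 = 0 \<and> M$1$1 \<noteq> M$2$2 \<longrightarrow>
             (\<forall>k. k \<noteq> 0 \<longrightarrow> Num M k = UNIV)))
    \<and> (CARD('a) mod 4 = 1 \<longrightarrow>
          (M$1$2 + M$2$1 \<noteq> 0 \<longrightarrow>
             real (card (Num M 0 - {0})) \<ge> (real CARD('a) - 1) / 2)
        \<and> (M$1$2 + M$2$1 = 0 \<longrightarrow>
             (M$1$1 = M$2$2 \<longrightarrow> (\<forall>k. Num M k = {k * M$1$1}) \<and> 0 \<in> Num0' M)
           \<and> (M$1$1 \<noteq> M$2$2 \<longrightarrow>
                (\<forall>k. real (card (Num M k)) \<le> (real CARD('a) + 1) / 2)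
              \<and> real (card (Num M 0)) = (real CARD('a) + 1) / 2
              \<and> real (card (Num0' M)) = (real CARD('a) - 1) / 2)))"
proof -
  define a where "a = M$1$1"
  define b where "b = M$2$2"
  define c where "c = M$1$2 + M$2$1"
  have NM: "Num M k = NS a c b k" for k unfolding a_def b_def c_def by (rule Num_eq)
  have e11: "N$1$1 = a" and e22: "N$2$2 = b" and e12: "N$1$2 + N$2$1 = c"
    unfolding a_def b_def c_def using assms by simp_all
  have NN: "Num N k = NS a c b k" for k
    unfolding Num_eq e11 e22 e12 ..
  have N0M: "Num0' M = N0 a c b" unfolding a_def b_def c_def by (rule Num0_eq)
  have N0N: "Num0' N = N0 a c b"
    unfolding Num0_eq e11 e22 e12 ..
  have sum: "M$2$2 + M$1$2 + M$2$1 + M$1$1 = a + b + c"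
    unfolding a_def b_def c_def by (simp add: algebra_simps)
  have P1: "Num0' M = Num0' N \<and> (\<forall>k. Num M k = Num N k)" using NM NN N0M N0N by simp
  have P2: "CARD('a) mod 4 = 3 \<longrightarrow> Num0' M = {}"
  proof
    assume m: "CARD('a) mod 4 = 3"
    have "N0 a c b = {}" by (rule case_i[OF mod4_3_nosqrt[OF m]])
    then show "Num0' M = {}" unfolding N0M .
  qed
  have P3: "even (CARD('a)) \<longrightarrow>
          (M$2$2 + M$1$2 + M$2$1 + M$1$1 \<noteq> 0 \<longrightarrow>
             Num0' M = UNIV - {0} \<and>
             (\<forall>k. k \<noteq> 0 \<longrightarrow> real (card (Num M k)) \<ge> real CARD('a) / 2))
        \<and> (M$2$2 + M$1$2 + M$2$1 + M$1$1 = 0 \<longrightarrow>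
             Num0' M = {0} \<and>
             (\<forall>k. k \<noteq> 0 \<longrightarrow> Num M k = UNIV \<or> card (Num M k) = 1))
        \<and> (M$1$2 + M$2$1 = 0 \<and> M$1$1 \<noteq> M$2$2 \<longrightarrow>
             (\<forall>k. k \<noteq> 0 \<longrightarrow> Num M k = UNIV))"
  proof
    assume "even (CARD('a))"
    then have two: "(2::'a) = 0" using even_iff_char2 by blast
    show "(M$2$2 + M$1$2 + M$2$1 + M$1$1 \<noteq> 0 \<longrightarrow>
             Num0' M = UNIV - {0} \<and>
             (\<forall>k. k \<noteq> 0 \<longrightarrow> real (card (Num M k)) \<ge> real CARD('a) / 2))
        \<and> (M$2$2 + M$1$2 + M$2$1 + M$1$1 = 0 \<longrightarrow>
             Num0' M = {0} \<and>
             (\<forall>k. k \<noteq> 0 \<longrightarrow> Num M k = UNIV \<or> card (Num M k) = 1))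
        \<and> (M$1$2 + M$2$1 = 0 \<and> M$1$1 \<noteq> M$2$2 \<longrightarrow>
             (\<forall>k. k \<noteq> 0 \<longrightarrow> Num M k = UNIV))"
      unfolding sum unfolding NM N0M c_def[symmetric] a_def[symmetric] b_def[symmetric]
    proof (intro conjI impI allI)
      assume s: "a + b + c \<noteq> 0"
      show "N0 a c b = UNIV - {0}" by (rule E1[OF two s])
    next
      fix k :: 'a assume s: "a + b + c \<noteq> 0" and k: "k \<noteq> 0"
      show "real CARD('a) / 2 \<le> real (card (NS a c b k))" by (rule E2[OF two s k])
    next
      assume s: "a + b + c = 0"
      show "N0 a c b = {0}" by (rule E3[OF two s])
    next
      fix k :: 'a assume s: "a + b + c = 0" and k: "k \<noteq> 0"
      show "NS a c b k = UNIV \<or> card (NS a c b k) = 1" by (rule E4[OF two s k])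
    next
      fix k :: 'a
      assume h: "c = 0 \<and> a \<noteq> b"
      show "NS a c b k = UNIV" using E5[OF two] h by blast
    qed
  qed
  have P4: "CARD('a) mod 4 = 1 \<longrightarrow>
          (M$1$2 + M$2$1 \<noteq> 0 \<longrightarrow>
             real (card (Num M 0 - {0})) \<ge> (real CARD('a) - 1) / 2)
        \<and> (M$1$2 + M$2$1 = 0 \<longrightarrow>
             (M$1$1 = M$2$2 \<longrightarrow> (\<forall>k. Num M k = {k * M$1$1}) \<and> 0 \<in> Num0' M)
           \<and> (M$1$1 \<noteq> M$2$2 \<longrightarrow>
                (\<forall>k. real (card (Num M k)) \<le> (real CARD('a) + 1) / 2)
              \<and> real (card (Num M 0)) = (real CARD('a) + 1) / 2
              \<and> real (card (Num0' M)) = (real CARD('a) - 1) / 2))"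
  proof
    assume m: "CARD('a) mod 4 = 1"
    obtain i :: 'a where ii: "i^2 = -1" using mod4_1_sqrt(1)[OF m] by blast
    have two: "(2::'a) \<noteq> 0" using mod4_1_sqrt(2)[OF m] .
    have A: "M$1$2 + M$2$1 \<noteq> 0 \<longrightarrow> real (card (Num M 0 - {0})) \<ge> (real CARD('a) - 1) / 2"
    proof
      assume "M$1$2 + M$2$1 \<noteq> 0"
      then have c: "c \<noteq> 0" unfolding c_def .
      show "real (card (Num M 0 - {0})) \<ge> (real CARD('a) - 1) / 2"
        unfolding NM by (rule O1[OF ii two c])
    qed
    have B: "M$1$2 + M$2$1 = 0 \<longrightarrow>
             (M$1$1 = M$2$2 \<longrightarrow> (\<forall>k. Num M k = {k * M$1$1}) \<and> 0 \<in> Num0' M)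
           \<and> (M$1$1 \<noteq> M$2$2 \<longrightarrow>
                (\<forall>k. real (card (Num M k)) \<le> (real CARD('a) + 1) / 2)
              \<and> real (card (Num M 0)) = (real CARD('a) + 1) / 2
              \<and> real (card (Num0' M)) = (real CARD('a) - 1) / 2)"
    proof
      assume "M$1$2 + M$2$1 = 0"
      then have c0: "c = 0" unfolding c_def .
      show "(M$1$1 = M$2$2 \<longrightarrow> (\<forall>k. Num M k = {k * M$1$1}) \<and> 0 \<in> Num0' M)
           \<and> (M$1$1 \<noteq> M$2$2 \<longrightarrow>
                (\<forall>k. real (card (Num M k)) \<le> (real CARD('a) + 1) / 2)
              \<and> real (card (Num M 0)) = (real CARD('a) + 1) / 2
              \<and> real (card (Num0' M)) = (real CARD('a) - 1) / 2)"
      proof (intro conjI impI allI)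
        assume "M$1$1 = M$2$2"
        then have ab: "b = a" unfolding a_def b_def by simp
        fix k
        show "Num M k = {k * M$1$1}" unfolding NM c0 ab a_def[symmetric] by (rule O2a[OF ii two])
      next
        assume "M$1$1 = M$2$2"
        then have ab: "b = a" unfolding a_def b_def by simp
        show "0 \<in> Num0' M" unfolding N0M c0 ab by (rule O2b[OF ii two])
      next
        assume "M$1$1 \<noteq> M$2$2"
        fix k
        show "real (card (Num M k)) \<le> (real CARD('a) + 1) / 2" unfolding NM c0 by (rule O3a[OF ii two])
      next
        assume "M$1$1 \<noteq> M$2$2"
        then have ab: "a \<noteq> b" unfolding a_def b_def .
        show "real (card (Num M 0)) = (real CARD('a) + 1) / 2" unfolding NM c0 by (rule O3b[OF ii two ab])
      next
        assume "M$1$1 \<noteq> M$2$2"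
        then have ab: "a \<noteq> b" unfolding a_def b_def .
        show "real (card (Num0' M)) = (real CARD('a) - 1) / 2" unfolding N0M c0 by (rule O3c[OF ii two ab])
      qed
    qed
    show "(M$1$2 + M$2$1 \<noteq> 0 \<longrightarrow>
             real (card (Num M 0 - {0})) \<ge> (real CARD('a) - 1) / 2)
        \<and> (M$1$2 + M$2$1 = 0 \<longrightarrow>
             (M$1$1 = M$2$2 \<longrightarrow> (\<forall>k. Num M k = {k * M$1$1}) \<and> 0 \<in> Num0' M)
           \<and> (M$1$1 \<noteq> M$2$2 \<longrightarrow>
                (\<forall>k. real (card (Num M k)) \<le> (real CARD('a) + 1) / 2)
              \<and> real (card (Num M 0)) = (real CARD('a) + 1) / 2
              \<and> real (card (Num0' M)) = (real CARD('a) - 1) / 2))"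
      using A B by (intro conjI)
  qed
  show ?thesis by (rule conjI[OF conjunct1[OF P1] conjI[OF conjunct2[OF P1] conjI[OF P2 conjI[OF P3 P4]]]])
qed

end
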